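(* Let $\mathcal A=\{G\in\mathcal G:\ \overline G\text{ is Abelian}\}$. The sets $\mathcal D=\{G\in\mathcal A:\ \overline G\text{ is divisible}\}$, $\mathcal T=\{G\in\mathcal A:\ \overline G\text{ is a torsion group}\}$ and $\mathcal F=\{G\in\mathcal A:\ \text{every finite Abelian group can be embedded into }\overline G\}$ are $G_\delta$ in $\mathcal A$.
   Context: Let $\mathbb N=\{1,2,3,\dots\}$. Equip $\mathbb N^{\mathbb N\times\mathbb N}$ with the product topology of the discrete topology on $\mathbb N$. Let $\mathcal G$ be the subspace consisting of those $A\in\mathbb N^{\mathbb N\times\mathbb N}$ that are the multiplication table of a group on the underlying set $\mathbb N$ whose identity element is $1$. For $G\in\mathcal G$, $\overline G$ denotes the group on $\mathbb N$ with multiplication table $G$. $\mathcal A$ carries the subspace topology. *)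

theory Defs
  imports "HOL-Analysis.Analysis" "HOL-Algebra.Algebra"
begin

definition Npos :: "nat set" where "Npos = {n. 1 \<le> n}"

definition tableSpace :: "(nat \<times> nat \<Rightarrow> nat) topology" where
  "tableSpace = product_topology (\<lambda>_. discrete_topology Npos) (Npos \<times> Npos)"

definition tbl :: "(nat \<times> nat \<Rightarrow> nat) \<Rightarrow> nat monoid" where
  "tbl M = \<lparr>carrier = Npos, mult = (\<lambda>x y. M (x, y)), one = 1\<rparr>"

definition calG :: "(nat \<times> nat \<Rightarrow> nat) set" where
  "calG = {M \<in> topspace tableSpace. group (tbl M)}"

definition calA :: "(nat \<times> nat \<Rightarrow> nat) set" where
  "calA = {M \<in> calG. comm_group (tbl M)}"

definition divisible_group :: "('a, 'b) monoid_scheme \<Rightarrow> bool" where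
  "divisible_group G \<longleftrightarrow>
     (\<forall>x \<in> carrier G. \<forall>n::nat. n \<ge> 1 \<longrightarrow> (\<exists>y \<in> carrier G. y [^]\<^bsub>G\<^esub> n = x))"

definition torsion_group :: "('a, 'b) monoid_scheme \<Rightarrow> bool" where
  "torsion_group G \<longleftrightarrow>
     (\<forall>x \<in> carrier G. \<exists>n::nat. n \<ge> 1 \<and> x [^]\<^bsub>G\<^esub> n = \<one>\<^bsub>G\<^esub>)"

text \<open>Every finite Abelian group embeds into G. Finite groups are represented
  (up to isomorphism) with carrier a finite set of naturals.\<close>
definition embeds_all_finite_abelian :: "('a, 'b) monoid_scheme \<Rightarrow> bool" where
  "embeds_all_finite_abelian G \<longleftrightarrow>
     (\<forall>H :: nat monoid. comm_group H \<and> finite (carrier H) \<longrightarrow>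
        (\<exists>h. h \<in> hom H G \<and> inj_on h (carrier H)))"

definition calD where "calD = {M \<in> calA. divisible_group (tbl M)}"
definition calT where "calT = {M \<in> calA. torsion_group (tbl M)}"
definition calF where "calF = {M \<in> calA. embeds_all_finite_abelian (tbl M)}"

end

theory Submission
  imports Defs
begin

lemma tbl_pow_Suc: "x [^]\<^bsub>tbl M\<^esub> (Suc n) = M (x [^]\<^bsub>tbl M\<^esub> n, x)"
  by (simp add: nat_pow_def tbl_def)

lemma tbl_pow_0: "x [^]\<^bsub>tbl M\<^esub> (0::nat) = 1"
  by (simp add: tbl_def)

lemma pow_agree:
  assumes "\<forall>k<n. M' (x [^]\<^bsub>tbl M\<^esub> k, x) = M (x [^]\<^bsub>tbl M\<^esub> k, x)"
  shows "x [^]\<^bsub>tbl M'\<^esub> n = x [^]\<^bsub>tbl M\<^esub> (n::nat)"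
  using assms
proof (induction n)
  case 0
  then show ?case by (simp add: tbl_def)
next
  case (Suc n)
  then show ?case by (simp add: tbl_def)
qed

lemma finite_agree_open:
  assumes S: "S \<subseteq> topspace tableSpace"
    and H: "\<And>M. M \<in> S \<Longrightarrow> \<exists>K. finite K \<and> (\<forall>M'\<in>topspace tableSpace. (\<forall>k\<in>K. M' k = M k) \<longrightarrow> M' \<in> S)"
  shows "openin tableSpace S"
proof (subst openin_subopen, intro ballI)
  fix M assume MS: "M \<in> S"
  obtain K where K: "finite K" "\<forall>M'\<in>topspace tableSpace. (\<forall>k\<in>K. M' k = M k) \<longrightarrow> M' \<in> S"
    using H[OF MS] by blast
  have Mt: "M \<in> topspace tableSpace" using MS S by blast
  hence Mt': "M \<in> (\<Pi>\<^sub>E i\<in>Npos \<times> Npos. Npos)" by (simp add: tableSpace_def)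
  define Xs where "Xs = (\<lambda>i. if i \<in> K \<inter> (Npos \<times> Npos) then {M i} else Npos)"
  define T where "T = (\<Pi>\<^sub>E i\<in>Npos \<times> Npos. Xs i)"
  have "openin tableSpace T"
    unfolding tableSpace_def T_def
  proof (rule product_topology_basis)
    show "\<And>i. openin (discrete_topology Npos) (Xs i)"
      using Mt' by (auto simp: Xs_def PiE_iff)
    show "finite {i. Xs i \<noteq> topspace (discrete_topology Npos)}"
      by (rule finite_subset[OF _ K(1)]) (auto simp: Xs_def split: if_splits)
  qed
  moreover have "M \<in> T" using Mt' by (auto simp: T_def Xs_def PiE_iff)
  moreover have "T \<subseteq> S"
  proof
    fix M' assume M'T: "M' \<in> T"
    have M't: "M' \<in> topspace tableSpace"
      using M'T Mt' unfolding T_def Xs_def tableSpace_def by (simp add: PiE_iff split: if_splits) metis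
    have "\<forall>k\<in>K. M' k = M k"
    proof
      fix k assume "k \<in> K"
      show "M' k = M k"
      proof (cases "k \<in> Npos \<times> Npos")
        case True
        then show ?thesis using M'T \<open>k \<in> K\<close> unfolding T_def Xs_def PiE_iff by (metis IntI singletonD)
      next
        case False
        then show ?thesis using M'T Mt' unfolding T_def by (metis PiE_arb)
      qed
    qed
    then show "M' \<in> S" using K(2) M't by blast
  qed
  ultimately show "\<exists>T. openin tableSpace T \<and> M \<in> T \<and> T \<subseteq> S" by blast
qed

lemma calA_sub: "calA \<subseteq> topspace tableSpace"
  by (auto simp: calA_def calG_def)

lemma gd:
  assumes "countable Fam" "\<forall>U\<in>Fam. openin tableSpace U" "S = calA \<inter> \<Inter>Fam"
  shows "gdelta_in (subtopology tableSpace calA) S"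
proof -
  have eq: "S = \<Inter> (insert calA ((\<lambda>U. U \<inter> calA) ` Fam))"
    using assms(3) by auto
  have top: "topspace (subtopology tableSpace calA) = calA"
    using calA_sub by auto
  show ?thesis
    unfolding eq
  proof (rule gdelta_in_Inter)
    show "countable (insert calA ((\<lambda>U. U \<inter> calA) ` Fam))" using assms(1) by simp
    show "insert calA ((\<lambda>U. U \<inter> calA) ` Fam) \<noteq> {}" by simp
    fix S' assume "S' \<in> insert calA ((\<lambda>U. U \<inter> calA) ` Fam)"
    then show "gdelta_in (subtopology tableSpace calA) S'"
    proof
      assume "S' = calA"
      then show ?thesis using top by (metis gdelta_in_topspace)
    next
      assume "S' \<in> (\<lambda>U. U \<inter> calA) ` Fam"
      then obtain U where "U \<in> Fam" "S' = U \<inter> calA" by blast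
      then show ?thesis using assms(2)
        by (metis open_imp_gdelta_in openin_subtopology_Int)
    qed
  qed
qed


lemma carrier_tbl [simp]: "carrier (tbl M) = Npos" by (simp add: tbl_def)
lemma one_tbl [simp]: "one (tbl M) = 1" by (simp add: tbl_def)
lemma mult_tbl [simp]: "mult (tbl M) x y = M (x, y)" by (simp add: tbl_def)

lemma D_gd: "gdelta_in (subtopology tableSpace calA) calD"
proof -
  define OD where "OD = (\<lambda>(x::nat,n::nat). {M \<in> topspace tableSpace. \<exists>y\<in>Npos. y [^]\<^bsub>tbl M\<^esub> n = x})"
  define Fam where "Fam = OD ` (Npos \<times> {n. n \<ge> 1})"
  show ?thesis
  proof (rule gd[of Fam])
    show "countable Fam" by (simp add: Fam_def)
    show "\<forall>U\<in>Fam. openin tableSpace U"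
    proof
      fix U assume "U \<in> Fam"
      then obtain x n where U: "U = OD (x,n)" by (auto simp: Fam_def)
      show "openin tableSpace U"
      proof (rule finite_agree_open)
        show "U \<subseteq> topspace tableSpace" by (auto simp: U OD_def)
        fix M assume "M \<in> U"
        then obtain y where y: "y \<in> Npos" "y [^]\<^bsub>tbl M\<^esub> n = x" by (auto simp: U OD_def)
        show "\<exists>K. finite K \<and> (\<forall>M'\<in>topspace tableSpace. (\<forall>k\<in>K. M' k = M k) \<longrightarrow> M' \<in> U)"
        proof (intro exI conjI ballI impI)
          show "finite ((\<lambda>k. (y [^]\<^bsub>tbl M\<^esub> k, y)) ` {..<n})" by simp
          fix M' assume M't: "M' \<in> topspace tableSpace"
            and ag: "\<forall>k\<in>(\<lambda>k. (y [^]\<^bsub>tbl M\<^esub> k, y)) ` {..<n}. M' k = M k"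
          have "y [^]\<^bsub>tbl M'\<^esub> n = y [^]\<^bsub>tbl M\<^esub> n" using ag by (intro pow_agree) auto
          then show "M' \<in> U" using y M't by (auto simp: U OD_def)
        qed
      qed
    qed
    show "calD = calA \<inter> \<Inter>Fam"
      using calA_sub by (auto simp: calD_def Fam_def OD_def divisible_group_def Npos_def)
  qed
qed

lemma T_gd: "gdelta_in (subtopology tableSpace calA) calT"
proof -
  define OT where "OT = (\<lambda>x::nat. {M \<in> topspace tableSpace. \<exists>n::nat. n \<ge> 1 \<and> x [^]\<^bsub>tbl M\<^esub> n = 1})"
  define Fam where "Fam = OT ` Npos"
  show ?thesis
  proof (rule gd[of Fam])
    show "countable Fam" by (simp add: Fam_def)
    show "\<forall>U\<in>Fam. openin tableSpace U"
    proof
      fix U assume "U \<in> Fam"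
      then obtain x where U: "U = OT x" by (auto simp: Fam_def)
      show "openin tableSpace U"
      proof (rule finite_agree_open)
        show "U \<subseteq> topspace tableSpace" by (auto simp: U OT_def)
        fix M assume "M \<in> U"
        then obtain n::nat where y: "n \<ge> 1" "x [^]\<^bsub>tbl M\<^esub> n = 1" by (auto simp: U OT_def)
        show "\<exists>K. finite K \<and> (\<forall>M'\<in>topspace tableSpace. (\<forall>k\<in>K. M' k = M k) \<longrightarrow> M' \<in> U)"
        proof (intro exI conjI ballI impI)
          show "finite ((\<lambda>k. (x [^]\<^bsub>tbl M\<^esub> k, x)) ` {..<n})" by simp
          fix M' assume M't: "M' \<in> topspace tableSpace"
            and ag: "\<forall>k\<in>(\<lambda>k. (x [^]\<^bsub>tbl M\<^esub> k, x)) ` {..<n}. M' k = M k"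
          have "x [^]\<^bsub>tbl M'\<^esub> n = x [^]\<^bsub>tbl M\<^esub> n" using ag by (intro pow_agree) auto
          then show "M' \<in> U" using y M't by (auto simp: U OT_def)
        qed
      qed
    qed
    show "calT = calA \<inter> \<Inter>Fam"
      using calA_sub by (auto simp: calT_def Fam_def OT_def torsion_group_def)
  qed
qed

definition Eset :: "nat set \<Rightarrow> (nat \<times> nat \<Rightarrow> nat) \<Rightarrow> (nat \<times> nat \<Rightarrow> nat) set" where
  "Eset A f = {M \<in> topspace tableSpace. \<exists>h. h \<in> A \<rightarrow> Npos \<and>
      (\<forall>x\<in>A. \<forall>y\<in>A. h (f (x, y)) = M (h x, h y)) \<and> inj_on h A}"

lemma Eset_open: assumes fA: "finite A" shows "openin tableSpace (Eset A f)"
proof (rule finite_agree_open)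
  show "Eset A f \<subseteq> topspace tableSpace" by (auto simp: Eset_def)
  fix M assume "M \<in> Eset A f"
  then obtain h where h: "h \<in> A \<rightarrow> Npos" "\<forall>x\<in>A. \<forall>y\<in>A. h (f (x, y)) = M (h x, h y)" "inj_on h A"
    by (auto simp: Eset_def)
  show "\<exists>K. finite K \<and> (\<forall>M'\<in>topspace tableSpace. (\<forall>k\<in>K. M' k = M k) \<longrightarrow> M' \<in> Eset A f)"
  proof (intro exI conjI ballI impI)
    show "finite ((\<lambda>(a,b). (h a, h b)) ` (A \<times> A))" using fA by simp
    fix M' assume M't: "M' \<in> topspace tableSpace"
      and ag: "\<forall>k\<in>(\<lambda>(a,b). (h a, h b)) ` (A \<times> A). M' k = M k"
    have "\<forall>x\<in>A. \<forall>y\<in>A. h (f (x, y)) = M' (h x, h y)"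
      using h(2) ag by auto
    then show "M' \<in> Eset A f" using h(1,3) M't by (auto simp: Eset_def)
  qed
qed


definition keyH :: "nat monoid \<Rightarrow> nat set \<times> (nat \<times> nat \<Rightarrow> nat)" where
  "keyH H = (carrier H, restrict (\<lambda>(x,y). mult H x y) (carrier H \<times> carrier H))"

lemma Eset_key:
  "{M \<in> topspace tableSpace. \<exists>h. h \<in> hom H (tbl M) \<and> inj_on h (carrier H)}
   = Eset (fst (keyH H)) (snd (keyH H))"
  by (auto simp: Eset_def keyH_def hom_def)

lemma F_gd: "gdelta_in (subtopology tableSpace calA) calF"
proof -
  define EH where "EH = (\<lambda>H::nat monoid. {M \<in> topspace tableSpace. \<exists>h. h \<in> hom H (tbl M) \<and> inj_on h (carrier H)})"
  define Fam where "Fam = EH ` {H. comm_group H \<and> finite (carrier H)}"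
  define P where "P = (\<Union>A\<in>{A::nat set. finite A}. (\<lambda>f. (A,f)) ` ((A \<times> A) \<rightarrow>\<^sub>E A))"
  have cP: "countable P"
    unfolding P_def
  proof (rule countable_UN)
    show "countable {A::nat set. finite A}" using countable_Collect_finite by (simp add: Collect_mono)
    fix A :: "nat set" assume "A \<in> {A. finite A}"
    then have "finite ((A \<times> A) \<rightarrow>\<^sub>E A)" by (simp add: finite_PiE)
    then show "countable ((\<lambda>f. (A,f)) ` ((A \<times> A) \<rightarrow>\<^sub>E A))" by (simp add: countable_finite)
  qed
  have sub: "Fam \<subseteq> (\<lambda>p. Eset (fst p) (snd p)) ` P"
  proof
    fix U assume "U \<in> Fam"
    then obtain H where H: "comm_group H" "finite (carrier H)" "U = EH H" by (auto simp: Fam_def)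
    have mon: "monoid H" using H(1) by (simp add: comm_group_def comm_monoid_def)
    have "keyH H \<in> P"
      unfolding P_def keyH_def using H(2) monoid.m_closed[OF mon] by (auto simp: PiE_iff)
    moreover have "U = Eset (fst (keyH H)) (snd (keyH H))" using H(3) Eset_key by (simp add: EH_def)
    ultimately show "U \<in> (\<lambda>p. Eset (fst p) (snd p)) ` P" by blast
  qed
  show ?thesis
  proof (rule gd[of Fam])
    show "countable Fam" using countable_subset[OF sub] cP by blast
    show "\<forall>U\<in>Fam. openin tableSpace U"
    proof
      fix U assume "U \<in> Fam"
      then obtain H where H: "comm_group H" "finite (carrier H)" "U = EH H" by (auto simp: Fam_def)
      show "openin tableSpace U" using H Eset_key Eset_open by (simp add: EH_def keyH_def)
    qed
    show "calF = calA \<inter> \<Inter>Fam"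
      using calA_sub by (auto simp: calF_def Fam_def EH_def embeds_all_finite_abelian_def)
  qed
qed

theorem proposition8p5:
  shows "gdelta_in (subtopology tableSpace calA) calD
       \<and> gdelta_in (subtopology tableSpace calA) calT
       \<and> gdelta_in (subtopology tableSpace calA) calF"
  using D_gd T_gd F_gd by blast

end
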